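(* Let $\hat W$ be a first degree iMPO in regular form with bond dimension $\chi$, and let $\hat V=\begin{pmatrix}\hat 1&\hat{\mathbf c}\\0&\hat{\mathsf A}\end{pmatrix}$ be its upper-left $(1+\chi)\times(1+\chi)$ block. Then $1$ is an eigenvalue of the transfer matrix $T_V$, every other eigenvalue $\lambda$ of $T_V$ satisfies $|\lambda|<1$, and there is a left eigenvector $X$ with $XT_V=X$ of the block form $$X=\begin{pmatrix}1&\mathbf x\\ \mathbf x^\dagger&\mathsf X\end{pmatrix},$$ where $\mathbf x$ is a row vector of length $\chi$ and $\mathsf X$ is a $\chi\times\chi$ matrix.
   Context: Fix the algebra $\mathcal A$ of operators on $\mathbb C^q$ with inner product $\langle\hat A,\hat B\rangle=\mathrm{Tr}[\hat A^\dagger\hat B]/\mathrm{Tr}[\hat 1]$ and an orthonormal basis $\{\hat O_\alpha\}_{0\le\alpha<q^2}$ with $\hat O_0=\hat 1$. For a matrix $\hat W$ with entries in $\mathcal A$ write $\hat W=\sum_\alpha\hat O_\alpha W_\alpha$ with complex matrices $(W_\alpha)_{ab}=\langle\hat O_\alpha,\hat W_{ab}\rangle$. For a square such $\hat W$, its transfer matrix $T_W=\sum_\alpha\overline{W_\alpha}\otimes W_\alpha$ acts on square complex matrices $X$ from the left by $XT_W=\sum_\alpha W_\alpha^\dagger XW_\alpha$; a left eigenvector means $XT_W=\lambda X$. An iMPO in regular form of bond dimension $\chi$ is a $(\chi+2)\times(\chi+2)$ matrix with entries in $\mathcal A$ (indices $0,1,\dots,\chi,\chi+1$) of block form $\hat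 W=\begin{pmatrix}\hat 1&\hat{\mathbf c}&\hat d\\0&\hat{\mathsf A}&\hat{\mathbf b}\\0&0&\hat 1\end{pmatrix}$ with block sizes $1,\chi,1$. It is called first degree if every eigenvalue of $T_A$, the transfer matrix of the $\chi\times\chi$ block $\hat{\mathsf A}$, has modulus strictly less than $1$. *)

theory Defs
  imports "Jordan_Normal_Form.Schur_Decomposition" "Jordan_Normal_Form.Char_Poly"
begin

definition mtrace :: "complex mat \<Rightarrow> complex" where
  "mtrace A = (\<Sum>i<dim_row A. A $$ (i, i))"

definition hs_inner :: "complex mat \<Rightarrow> complex mat \<Rightarrow> complex" where
  "hs_inner A B = mtrace (mat_adjoint A * B) / mtrace (1\<^sub>m (dim_row A))"

definition orthonormal_op_basis :: "nat \<Rightarrow> (nat \<Rightarrow> complex mat) \<Rightarrow> bool" where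
  "orthonormal_op_basis q B \<longleftrightarrow>
     (\<forall>\<alpha><q^2. B \<alpha> \<in> carrier_mat q q) \<and>
     (\<forall>\<alpha><q^2. \<forall>\<beta><q^2. hs_inner (B \<alpha>) (B \<beta>) = (if \<alpha> = \<beta> then 1 else 0)) \<and>
     B 0 = 1\<^sub>m q"

definition op_matrix :: "nat \<Rightarrow> complex mat mat \<Rightarrow> bool" where
  "op_matrix q W \<longleftrightarrow> (\<forall>a<dim_row W. \<forall>b<dim_col W. W $$ (a, b) \<in> carrier_mat q q)"

definition comp :: "(nat \<Rightarrow> complex mat) \<Rightarrow> complex mat mat \<Rightarrow> nat \<Rightarrow> complex mat" where
  "comp B W \<alpha> = mat (dim_row W) (dim_col W) (\<lambda>(a, b). hs_inner (B \<alpha>) (W $$ (a, b)))"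

definition kron :: "complex mat \<Rightarrow> complex mat \<Rightarrow> complex mat" where
  "kron A B = mat (dim_row A * dim_row B) (dim_col A * dim_col B)
     (\<lambda>(i, j). A $$ (i div dim_row B, j div dim_col B) * B $$ (i mod dim_row B, j mod dim_col B))"

definition transfer_mat :: "nat \<Rightarrow> (nat \<Rightarrow> complex mat) \<Rightarrow> complex mat mat \<Rightarrow> complex mat" where
  "transfer_mat q B W = mat (dim_row W * dim_row W) (dim_row W * dim_row W)
     (\<lambda>ij. \<Sum>\<alpha><q^2. kron (map_mat cnj (comp B W \<alpha>)) (comp B W \<alpha>) $$ ij)"

text \<open>Row-major vectorisation of a square matrix X, and row vector times matrix;
  so that  row_times (vec_of X) (transfer_mat q B W) = vec_of (sum_alpha W_alpha^dagger X W_alpha).\<close>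
definition vec_of :: "complex mat \<Rightarrow> complex vec" where
  "vec_of X = vec (dim_row X * dim_col X) (\<lambda>k. X $$ (k div dim_col X, k mod dim_col X))"

definition row_times :: "complex vec \<Rightarrow> complex mat \<Rightarrow> complex vec" where
  "row_times v T = vec (dim_col T) (\<lambda>j. \<Sum>i<dim_vec v. v $ i * T $$ (i, j))"

definition regular_form :: "nat \<Rightarrow> nat \<Rightarrow> complex mat mat \<Rightarrow> bool" where
  "regular_form q chi W \<longleftrightarrow>
     W \<in> carrier_mat (chi + 2) (chi + 2) \<and> op_matrix q W \<and>
     W $$ (0, 0) = 1\<^sub>m q \<and> W $$ (chi + 1, chi + 1) = 1\<^sub>m q \<and>
     (\<forall>i. 1 \<le> i \<and> i \<le> chi + 1 \<longrightarrow> W $$ (i, 0) = 0\<^sub>m q q) \<and>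
     (\<forall>j\<le>chi. W $$ (chi + 1, j) = 0\<^sub>m q q)"

definition blockA :: "nat \<Rightarrow> complex mat mat \<Rightarrow> complex mat mat" where
  "blockA chi W = mat chi chi (\<lambda>(i, j). W $$ (i + 1, j + 1))"

definition blockV :: "nat \<Rightarrow> complex mat mat \<Rightarrow> complex mat mat" where
  "blockV chi W = mat (chi + 1) (chi + 1) (\<lambda>(i, j). W $$ (i, j))"

definition first_degree :: "nat \<Rightarrow> (nat \<Rightarrow> complex mat) \<Rightarrow> nat \<Rightarrow> complex mat mat \<Rightarrow> bool" where
  "first_degree q B chi W \<longleftrightarrow> regular_form q chi W \<and>
     (\<forall>l. eigenvalue (transfer_mat q B (blockA chi W)) l \<longrightarrow> cmod l < 1)"

end

theory Submission
  imports Defs "Jordan_Normal_Form.Spectral_Radius"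
begin


lemma sum_pair_idx:
  fixes f :: "nat \<Rightarrow> 'a::comm_monoid_add"
  shows "(\<Sum>k<m*n. f k) = (\<Sum>c<m. \<Sum>d<n. f (c*n+d))"
proof (induction m)
  case 0 then show ?case by simp
next
  case (Suc m)
  have "(\<Sum>k<Suc m*n. f k) = (\<Sum>k<m*n. f k) + (\<Sum>k\<in>{m*n..<m*n+n}. f k)"
    by (simp add: sum.atLeastLessThan_concat[symmetric] lessThan_atLeast0 add.commute)
  also have "(\<Sum>k\<in>{m*n..<m*n+n}. f k) = (\<Sum>d<n. f (m*n+d))"
    using sum.shift_bounds_nat_ivl[of f 0 "m*n" n] by (simp add: lessThan_atLeast0 add.commute)
  finally show ?case using Suc by simp
qed

lemma divmod_idx: "d < (n::nat) \<Longrightarrow> (c*n+d) div n = c \<and> (c*n+d) mod n = d"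
  by auto

lemma transfer_entry:
  assumes "W \<in> carrier_mat m m" "i < m*m" "j < m*m"
  shows "transfer_mat q B W $$ (i,j) =
    (\<Sum>\<alpha><q^2. cnj (comp B W \<alpha> $$ (i div m, j div m)) * comp B W \<alpha> $$ (i mod m, j mod m))"
proof -
  have "m > 0" using assms by (cases m) auto
  then have "i div m < m" "j div m < m" "i mod m < m" "j mod m < m" using assms
    by (auto simp: less_mult_imp_div_less)
  then show ?thesis using assms
    by (simp add: transfer_mat_def kron_def comp_def)
qed

lemma transfer_carrier:
  assumes "W \<in> carrier_mat m m"
  shows "transfer_mat q B W \<in> carrier_mat (m*m) (m*m)"
  using assms by (simp add: transfer_mat_def)

lemma idx_decomp: "k < (m::nat)*m \<Longrightarrow> k div m < m \<and> k mod m < m \<and> k = (k div m)*m + k mod m"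
proof -
  assume k: "k < m*m"
  then have "m > 0" by (cases m) auto
  then show ?thesis using k by (simp add: less_mult_imp_div_less)
qed

lemma vec_eq_idx:
  assumes "u \<in> carrier_vec (m*m)" "w \<in> carrier_vec (m*m)"
    "\<And>a b. a < m \<Longrightarrow> b < m \<Longrightarrow> u $ (a*m+b) = w $ (a*m+b)"
  shows "u = w"
proof (rule eq_vecI)
  show "dim_vec u = dim_vec w" using assms by simp
  fix k assume "k < dim_vec w"
  then have k: "k < m*m" using assms by simp
  from idx_decomp[OF k] assms(3)[of "k div m" "k mod m"] show "u $ k = w $ k" by metis
qed

lemma vec_of_carrier: "X \<in> carrier_mat m m \<Longrightarrow> vec_of X \<in> carrier_vec (m*m)"
  by (simp add: vec_of_def)

lemma idx_lt: "a < m \<Longrightarrow> b < (m::nat) \<Longrightarrow> a*m+b < m*m"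
proof -
  assume "a < m" "b < m"
  then have "a*m+b < Suc a * m" by simp
  also have "... \<le> m*m" using \<open>a<m\<close> by (intro mult_le_mono1) simp
  finally show ?thesis .
qed

lemma vec_of_idx: "X \<in> carrier_mat m m \<Longrightarrow> a < m \<Longrightarrow> b < m \<Longrightarrow> vec_of X $ (a*m+b) = X $$ (a,b)"
  using idx_lt[of a m b] by (simp add: vec_of_def)

lemma right_act:
  assumes W: "W \<in> carrier_mat m m" and y: "y \<in> carrier_vec (m*m)" and ab: "a < m" "b < m"
  shows "(transfer_mat q B W *\<^sub>v y) $ (a*m+b) =
    (\<Sum>c<m. \<Sum>d<m. (\<Sum>\<alpha><q^2. cnj (comp B W \<alpha> $$ (a,c)) * comp B W \<alpha> $$ (b,d)) * y $ (c*m+d))"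
proof -
  have T: "transfer_mat q B W \<in> carrier_mat (m*m) (m*m)" using W by (rule transfer_carrier)
  have i: "a*m+b < m*m" using ab by (rule idx_lt)
  have "(transfer_mat q B W *\<^sub>v y) $ (a*m+b) = (\<Sum>k<m*m. transfer_mat q B W $$ (a*m+b, k) * y $ k)"
    using T y i by (simp add: scalar_prod_def lessThan_atLeast0)
  also have "... = (\<Sum>c<m. \<Sum>d<m. transfer_mat q B W $$ (a*m+b, c*m+d) * y $ (c*m+d))"
    by (rule sum_pair_idx)
  also have "... = (\<Sum>c<m. \<Sum>d<m. (\<Sum>\<alpha><q^2. cnj (comp B W \<alpha> $$ (a,c)) * comp B W \<alpha> $$ (b,d)) * y $ (c*m+d))"
    apply (intro sum.cong refl)
    apply (subst transfer_entry[OF W i idx_lt])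
    using ab by auto
  finally show ?thesis .
qed

lemma left_act:
  assumes W: "W \<in> carrier_mat m m" and v: "v \<in> carrier_vec (m*m)" and cd: "c < m" "d < m"
  shows "row_times v (transfer_mat q B W) $ (c*m+d) =
    (\<Sum>a<m. \<Sum>b<m. v $ (a*m+b) * (\<Sum>\<alpha><q^2. cnj (comp B W \<alpha> $$ (a,c)) * comp B W \<alpha> $$ (b,d)))"
proof -
  have T: "transfer_mat q B W \<in> carrier_mat (m*m) (m*m)" using W by (rule transfer_carrier)
  have j: "c*m+d < m*m" using cd by (rule idx_lt)
  have "row_times v (transfer_mat q B W) $ (c*m+d) = (\<Sum>k<m*m. v $ k * transfer_mat q B W $$ (k, c*m+d))"
    using T v j by (simp add: row_times_def)
  also have "... = (\<Sum>a<m. \<Sum>b<m. v $ (a*m+b) * transfer_mat q B W $$ (a*m+b, c*m+d))"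
    by (rule sum_pair_idx)
  also have "... = (\<Sum>a<m. \<Sum>b<m. v $ (a*m+b) * (\<Sum>\<alpha><q^2. cnj (comp B W \<alpha> $$ (a,c)) * comp B W \<alpha> $$ (b,d)))"
    apply (intro sum.cong refl)
    apply (subst transfer_entry[OF W idx_lt j])
    using cd by auto
  finally show ?thesis .
qed

lemma row_times_carrier: "T \<in> carrier_mat n n \<Longrightarrow> row_times v T \<in> carrier_vec n"
  by (simp add: row_times_def)



lemma swap4:
  "(\<Sum>a\<in>A. \<Sum>b\<in>B. \<Sum>c\<in>C. \<Sum>d\<in>D. f a b c d) = (\<Sum>c\<in>C. \<Sum>d\<in>D. \<Sum>a\<in>A. \<Sum>b\<in>B. f a b c d)"
proof -
  have "(\<Sum>a\<in>A. \<Sum>b\<in>B. \<Sum>c\<in>C. \<Sum>d\<in>D. f a b c d) = (\<Sum>a\<in>A. \<Sum>c\<in>C. \<Sum>b\<in>B. \<Sum>d\<in>D. f a b c d)"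
    by (rule sum.cong[OF refl], rule sum.swap)
  also have "... = (\<Sum>a\<in>A. \<Sum>c\<in>C. \<Sum>d\<in>D. \<Sum>b\<in>B. f a b c d)"
    by (intro sum.cong[OF refl], rule sum.swap)
  also have "... = (\<Sum>c\<in>C. \<Sum>a\<in>A. \<Sum>d\<in>D. \<Sum>b\<in>B. f a b c d)"
    by (rule sum.swap)
  also have "... = (\<Sum>c\<in>C. \<Sum>d\<in>D. \<Sum>a\<in>A. \<Sum>b\<in>B. f a b c d)"
    by (rule sum.cong[OF refl], rule sum.swap)
  finally show ?thesis .
qed

lemma swap3:
  "(\<Sum>a\<in>A. \<Sum>b\<in>B. \<Sum>c\<in>C. f a b c) = (\<Sum>c\<in>C. \<Sum>a\<in>A. \<Sum>b\<in>B. f a b c)"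
proof -
  have "(\<Sum>a\<in>A. \<Sum>b\<in>B. \<Sum>c\<in>C. f a b c) = (\<Sum>a\<in>A. \<Sum>c\<in>C. \<Sum>b\<in>B. f a b c)"
    by (rule sum.cong[OF refl], rule sum.swap)
  also have "... = (\<Sum>c\<in>C. \<Sum>a\<in>A. \<Sum>b\<in>B. f a b c)"
    by (rule sum.swap)
  finally show ?thesis .
qed

fun Pseq :: "nat \<Rightarrow> nat \<Rightarrow> (nat \<Rightarrow> complex mat) \<Rightarrow> complex vec \<Rightarrow> nat \<Rightarrow> nat \<Rightarrow> nat \<Rightarrow> complex" where
  "Pseq N m M v 0 a b = v$a * cnj (v$b)"
| "Pseq N m M v (Suc k) a b = (\<Sum>\<alpha><N. \<Sum>c<m. \<Sum>d<m. M \<alpha> $$ (a,c) * Pseq N m M v k c d * cnj (M \<alpha> $$ (b,d)))"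

definition qform :: "nat \<Rightarrow> (nat \<Rightarrow> nat \<Rightarrow> complex) \<Rightarrow> (nat \<Rightarrow> complex) \<Rightarrow> complex" where
  "qform m P x = (\<Sum>a<m. \<Sum>b<m. cnj (x a) * P a b * x b)"

lemma qform_step:
  "qform m (Pseq N m M v (Suc k)) x =
   (\<Sum>\<alpha><N. qform m (Pseq N m M v k) (\<lambda>c. \<Sum>a<m. cnj (M \<alpha> $$ (a,c)) * x a))"
proof -
  let ?P = "Pseq N m M v k"
  have "qform m (Pseq N m M v (Suc k)) x =
    (\<Sum>a<m. \<Sum>b<m. \<Sum>\<alpha><N. \<Sum>c<m. \<Sum>d<m. cnj (x a) * (M \<alpha> $$ (a,c) * ?P c d * cnj (M \<alpha> $$ (b,d))) * x b)"
    by (simp add: qform_def sum_distrib_left sum_distrib_right)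
  also have "... = (\<Sum>\<alpha><N. \<Sum>a<m. \<Sum>b<m. \<Sum>c<m. \<Sum>d<m. cnj (x a) * (M \<alpha> $$ (a,c) * ?P c d * cnj (M \<alpha> $$ (b,d))) * x b)"
    by (rule swap3)
  also have "... = (\<Sum>\<alpha><N. \<Sum>c<m. \<Sum>d<m. \<Sum>a<m. \<Sum>b<m. cnj (x a) * (M \<alpha> $$ (a,c) * ?P c d * cnj (M \<alpha> $$ (b,d))) * x b)"
    by (rule sum.cong[OF refl], rule swap4)
  also have "... = (\<Sum>\<alpha><N. qform m (Pseq N m M v k) (\<lambda>c. \<Sum>a<m. cnj (M \<alpha> $$ (a,c)) * x a))"
    by (simp add: qform_def sum_distrib_left sum_distrib_right mult_ac)
  finally show ?thesis .
qed

lemma qform_lower: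
  assumes M0: "M 0 \<in> carrier_mat m m" and v: "v \<in> carrier_vec m"
    and ev: "M 0 *\<^sub>v v = \<mu> \<cdot>\<^sub>v v" and N: "0 < N"
  shows "Im (qform m (Pseq N m M v k) x) = 0 \<and>
    Re (qform m (Pseq N m M v k) x) \<ge> (cmod \<mu>)^(2*k) * (cmod (\<Sum>a<m. cnj (x a) * v$a))^2"
proof (induction k arbitrary: x)
  case 0
  have "qform m (Pseq N m M v 0) x = (\<Sum>a<m. cnj (x a) * v$a) * cnj (\<Sum>a<m. cnj (x a) * v$a)"
    by (simp add: qform_def sum_distrib_left sum_distrib_right mult_ac)
  also have "... = of_real ((cmod (\<Sum>a<m. cnj (x a) * v$a))^2)"
    by (rule complex_norm_square[symmetric])
  finally have h: "qform m (Pseq N m M v 0) x = of_real ((cmod (\<Sum>a<m. cnj (x a) * v$a))^2)" .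
  show ?case by (simp only: h Re_complex_of_real Im_complex_of_real) simp
next
  case (Suc k)
  define u where "u \<alpha> = (\<lambda>c. \<Sum>a<m. cnj (M \<alpha> $$ (a,c)) * x a)" for \<alpha>
  have eq: "qform m (Pseq N m M v (Suc k)) x = (\<Sum>\<alpha><N. qform m (Pseq N m M v k) (u \<alpha>))"
    unfolding u_def by (rule qform_step)
  have im: "Im (qform m (Pseq N m M v (Suc k)) x) = 0"
    unfolding eq Im_sum using Suc by simp
  have key: "(\<Sum>c<m. cnj (u 0 c) * v$c) = \<mu> * (\<Sum>a<m. cnj (x a) * v$a)"
  proof -
    have cu: "cnj (u 0 c) = (\<Sum>a<m. M 0 $$ (a,c) * cnj (x a))" for c
      by (simp add: u_def)
    have "(\<Sum>c<m. cnj (u 0 c) * v$c) = (\<Sum>c<m. \<Sum>a<m. M 0 $$ (a,c) * cnj (x a) * v$c)"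
      unfolding cu sum_distrib_right ..
    also have "... = (\<Sum>c<m. \<Sum>a<m. cnj (x a) * (M 0 $$ (a,c) * v$c))"
      by (intro sum.cong refl) (metis mult.assoc mult.commute)
    also have "... = (\<Sum>a<m. cnj (x a) * (\<Sum>c<m. M 0 $$ (a,c) * v$c))"
      unfolding sum_distrib_left by (rule sum.swap)
    also have "... = (\<Sum>a<m. cnj (x a) * (\<mu> * v$a))"
    proof (rule sum.cong[OF refl])
      fix a assume "a \<in> {..<m}"
      then have a: "a < m" by simp
      have "(M 0 *\<^sub>v v) $ a = (\<Sum>c<m. M 0 $$ (a,c) * v$c)"
        using M0 v a by (simp add: scalar_prod_def lessThan_atLeast0)
      moreover have "(M 0 *\<^sub>v v) $ a = \<mu> * v$a" using ev v a M0 by simp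
      ultimately show "cnj (x a) * (\<Sum>c<m. M 0 $$ (a,c) * v$c) = cnj (x a) * (\<mu> * v$a)" by simp
    qed
    also have "... = \<mu> * (\<Sum>a<m. cnj (x a) * v$a)"
      unfolding sum_distrib_left by (intro sum.cong refl) (metis mult.left_commute)
    finally show ?thesis .
  qed
  have s0: "Re (qform m (Pseq N m M v (Suc k)) x) = (\<Sum>\<alpha><N. Re (qform m (Pseq N m M v k) (u \<alpha>)))"
    unfolding eq Re_sum ..
  have s1: "(\<Sum>\<alpha><N. Re (qform m (Pseq N m M v k) (u \<alpha>))) \<ge> Re (qform m (Pseq N m M v k) (u 0))"
  proof (rule member_le_sum)
    show "0 \<in> {..<N}" using N by simp
    fix \<alpha> assume "\<alpha> \<in> {..<N} - {0}"
    have "0 \<le> (cmod \<mu>)^(2*k) * (cmod (\<Sum>a<m. cnj (u \<alpha> a) * v$a))^2" by simp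
    also have "... \<le> Re (qform m (Pseq N m M v k) (u \<alpha>))" using Suc[of "u \<alpha>"] by simp
    finally show "0 \<le> Re (qform m (Pseq N m M v k) (u \<alpha>))" .
  qed simp
  have s2: "Re (qform m (Pseq N m M v k) (u 0)) \<ge> (cmod \<mu>)^(2*k) * (cmod (\<Sum>a<m. cnj (u 0 a) * v$a))^2"
    using Suc[of "u 0"] by simp
  have s3: "(cmod \<mu>)^(2*k) * (cmod (\<Sum>a<m. cnj (u 0 a) * v$a))^2 =
      (cmod \<mu>)^(2*Suc k) * (cmod (\<Sum>a<m. cnj (x a) * v$a))^2"
    unfolding key by (simp add: norm_mult power_mult_distrib power_add power2_eq_square)
  have "Re (qform m (Pseq N m M v (Suc k)) x) \<ge> (cmod \<mu>)^(2*Suc k) * (cmod (\<Sum>a<m. cnj (x a) * v$a))^2"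
    using s0 s1 s2 s3 by linarith
  then show ?case using im by (intro conjI)
qed

lemma core_bound:
  fixes N m :: nat and M :: "nat \<Rightarrow> complex mat" and c :: real
  assumes T: "T \<in> carrier_mat (m*m) (m*m)"
    and Te: "\<And>i j. i < m*m \<Longrightarrow> j < m*m \<Longrightarrow> T $$ (i,j) =
        (\<Sum>\<alpha><N. cnj (M \<alpha> $$ (i div m, j div m)) * M \<alpha> $$ (i mod m, j mod m))"
    and bnd: "\<And>k. norm_bound (T ^\<^sub>m k) c"
    and M0: "M 0 \<in> carrier_mat m m" and v: "v \<in> carrier_vec m" and vnz: "v \<noteq> 0\<^sub>v m"
    and ev: "M 0 *\<^sub>v v = \<mu> \<cdot>\<^sub>v v" and N: "0 < N"
  shows "cmod \<mu> \<le> 1"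
proof (rule ccontr)
  assume "\<not> cmod \<mu> \<le> 1"
  then have mu1: "cmod \<mu> > 1" by simp
  define y where "y k = vec (m*m) (\<lambda>i. cnj (Pseq N m M v k (i div m) (i mod m)))" for k
  have ycar: "y k \<in> carrier_vec (m*m)" for k by (simp add: y_def)
  have yidx: "y k $ (a*m+b) = cnj (Pseq N m M v k a b)" if "a < m" "b < m" for k a b
    using that idx_lt[OF that] by (simp add: y_def)
  have step: "T *\<^sub>v y k = y (Suc k)" for k
  proof (rule vec_eq_idx[of _ m])
    show "T *\<^sub>v y k \<in> carrier_vec (m*m)" using T ycar[of k] by (rule mult_mat_vec_carrier)
    show "y (Suc k) \<in> carrier_vec (m*m)" by (rule ycar)
    fix a b assume ab: "a < m" "b < m"
    have i: "a*m+b < m*m" using ab by (rule idx_lt)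
    have "(T *\<^sub>v y k) $ (a*m+b) = (\<Sum>j<m*m. T $$ (a*m+b, j) * y k $ j)"
      using T ycar[of k] i by (simp add: scalar_prod_def lessThan_atLeast0)
    also have "... = (\<Sum>c<m. \<Sum>d<m. T $$ (a*m+b, c*m+d) * y k $ (c*m+d))"
      by (rule sum_pair_idx)
    also have "... = (\<Sum>c<m. \<Sum>d<m. \<Sum>\<alpha><N. cnj (M \<alpha> $$ (a,c)) * M \<alpha> $$ (b,d) * cnj (Pseq N m M v k c d))"
      apply (intro sum.cong refl)
      apply (subst Te[OF i idx_lt])
      using ab by (auto simp: yidx sum_distrib_right)
    also have "... = (\<Sum>\<alpha><N. \<Sum>c<m. \<Sum>d<m. cnj (M \<alpha> $$ (a,c)) * M \<alpha> $$ (b,d) * cnj (Pseq N m M v k c d))"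
      by (rule swap3)
    also have "... = y (Suc k) $ (a*m+b)"
      using ab by (simp add: yidx mult_ac)
    finally show "(T *\<^sub>v y k) $ (a*m+b) = y (Suc k) $ (a*m+b)" .
  qed
  have pow: "T ^\<^sub>m k *\<^sub>v y j = y (j+k)" for k j
  proof (induction k arbitrary: j)
    case 0
    then show ?case using T ycar[of j] by simp
  next
    case (Suc k)
    have "T ^\<^sub>m Suc k *\<^sub>v y j = T ^\<^sub>m k *\<^sub>v (T *\<^sub>v y j)"
      using T ycar[of j] by (simp add: assoc_mult_mat_vec[of _ "m*m" "m*m"])
    also have "... = y (j + Suc k)" using Suc[of "Suc j"] step by simp
    finally show ?case .
  qed
  define K where "K = (\<Sum>j<m*m. cmod (y 0 $ j))"
  have Pb: "cmod (Pseq N m M v k a b) \<le> c * K" if ab: "a < m" "b < m" for k a b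
  proof -
    have i: "a*m+b < m*m" using ab by (rule idx_lt)
    have "cmod (Pseq N m M v k a b) = cmod ((T ^\<^sub>m k *\<^sub>v y 0) $ (a*m+b))"
      using pow[of k 0] yidx[OF ab, of k] by simp
    also have "(T ^\<^sub>m k *\<^sub>v y 0) $ (a*m+b) = (\<Sum>j<m*m. (T ^\<^sub>m k) $$ (a*m+b, j) * y 0 $ j)"
      using T ycar[of 0] i by (simp add: scalar_prod_def lessThan_atLeast0)
    also have "cmod ... \<le> (\<Sum>j<m*m. cmod ((T ^\<^sub>m k) $$ (a*m+b, j)) * cmod (y 0 $ j))"
      by (rule order_trans[OF norm_sum]) (simp add: norm_mult)
    also have "... \<le> (\<Sum>j<m*m. c * cmod (y 0 $ j))"
    proof (rule sum_mono)
      fix j assume "j \<in> {..<m*m}"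
      then have "cmod ((T ^\<^sub>m k) $$ (a*m+b, j)) \<le> c"
        using bnd[of k] T i unfolding norm_bound_def by auto
      then show "cmod ((T ^\<^sub>m k) $$ (a*m+b, j)) * cmod (y 0 $ j) \<le> c * cmod (y 0 $ j)"
        by (simp add: mult_right_mono)
    qed
    also have "... = c * K" by (simp add: K_def sum_distrib_left)
    finally show ?thesis .
  qed
  define vf where "vf a = v $ a" for a
  define C0 where "C0 = c * K * (\<Sum>a<m. cmod (vf a))^2"
  define S where "S = (\<Sum>a<m. (cmod (vf a))^2)"
  have Sc: "(\<Sum>a<m. cnj (vf a) * v$a) = of_real S"
    unfolding S_def of_real_sum by (intro sum.cong refl) (metis complex_norm_square mult.commute vf_def)
  have Spos: "S > 0"
  proof -
    obtain a where a: "a < m" "v $ a \<noteq> 0" using vnz v by (metis eq_vecI carrier_vecD index_zero_vec)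
    have "0 < (cmod (vf a))^2" using a by (simp add: vf_def)
    also have "... \<le> S" unfolding S_def by (rule member_le_sum) (use a in auto)
    finally show ?thesis .
  qed
  have m0: "0 < m" using Spos unfolding S_def by (cases m) auto
  have cK: "0 \<le> c * K" using Pb[OF m0 m0, of 0] norm_ge_zero order_trans by blast
  have up: "Re (qform m (Pseq N m M v k) vf) \<le> C0" for k
  proof -
    have "Re (qform m (Pseq N m M v k) vf) \<le> cmod (qform m (Pseq N m M v k) vf)"
      by (rule complex_Re_le_cmod)
    also have "... \<le> (\<Sum>a<m. \<Sum>b<m. cmod (vf a) * (c * K) * cmod (vf b))"
      unfolding qform_def
      apply (rule order_trans[OF norm_sum], rule sum_mono)
      apply (rule order_trans[OF norm_sum], rule sum_mono)
      apply (simp add: norm_mult)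
      apply (intro mult_mono mult_left_mono Pb)
      using cK by auto
    also have "... = C0"
      by (simp add: C0_def power2_eq_square sum_distrib_left sum_distrib_right mult_ac)
    finally show ?thesis .
  qed
  have low: "(cmod \<mu>)^(2*k) * S^2 \<le> C0" for k
  proof -
    have "(cmod \<mu>)^(2*k) * S^2 = (cmod \<mu>)^(2*k) * (cmod (\<Sum>a<m. cnj (vf a) * v$a))^2"
      unfolding Sc using Spos by simp
    also have "... \<le> Re (qform m (Pseq N m M v k) vf)"
      using qform_lower[of M m v \<mu> N k vf, OF M0 v ev N] by simp
    also have "... \<le> C0" by (rule up)
    finally show ?thesis .
  qed
  have "1 < (cmod \<mu>)^2" using mu1 by (simp add: one_less_power)
  from real_arch_pow[OF this, of "C0 / S^2"] obtain k where k: "C0 / S^2 < ((cmod \<mu>)^2)^k" by blast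
  then have "C0 < (cmod \<mu>)^(2*k) * S^2" using Spos by (simp add: divide_less_eq power_mult)
  with low[of k] show False by simp
qed

lemma smult_mat_vec:
  assumes "A \<in> carrier_mat n k" "v \<in> carrier_vec k"
  shows "(a \<cdot>\<^sub>m A) *\<^sub>v v = a \<cdot>\<^sub>v (A *\<^sub>v v)"
  using assms by (intro eq_vecI) (auto simp: scalar_prod_def sum_distrib_left mult.assoc)

lemma comp_carrier: "W \<in> carrier_mat m m \<Longrightarrow> comp B W \<alpha> \<in> carrier_mat m m"
  by (simp add: comp_def)


lemma A0_eig:
  fixes q m :: nat
  assumes W: "W \<in> carrier_mat m m" and q: "0 < q"
    and all: "\<And>l. eigenvalue (transfer_mat q B W) l \<Longrightarrow> cmod l < 1"
    and eig: "eigenvalue (comp B W 0) \<mu>"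
  shows "cmod \<mu> < 1"
proof -
  define T where "T = transfer_mat q B W"
  have T: "T \<in> carrier_mat (m*m) (m*m)" unfolding T_def using W by (rule transfer_carrier)
  from eig obtain v where v: "v \<in> carrier_vec m" "v \<noteq> 0\<^sub>v m" "comp B W 0 *\<^sub>v v = \<mu> \<cdot>\<^sub>v v"
    unfolding eigenvalue_def eigenvector_def using comp_carrier[OF W, of B 0] by auto
  have m0: "0 < m"
  proof (rule ccontr)
    assume "\<not> 0 < m"
    then have "m = 0" by simp
    with v have "v = 0\<^sub>v m" by (intro eq_vecI) auto
    with v(2) show False by simp
  qed
  then have mm0: "0 < m*m" by simp
  define sr where "sr = spectral_radius T"
  from spectral_radius_mem_max(1)[OF T mm0] obtain l0 where "eigenvalue T l0" "sr = cmod l0"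
    unfolding sr_def spectrum_def by auto
  with all have sr1: "sr < 1" and sr0: "0 \<le> sr" unfolding T_def by auto
  define s where "s = 2 / (1 + sr)"
  have s1: "1 < s" using sr1 sr0 by (simp add: s_def field_simps)
  have ssr: "s * sr < 1" using sr1 sr0 by (simp add: s_def field_simps)
  define T' where "T' = complex_of_real s \<cdot>\<^sub>m T"
  have T': "T' \<in> carrier_mat (m*m) (m*m)" using T by (simp add: T'_def)
  have evT': "cmod l < 1" if "eigenvalue T' l" for l
  proof -
    from that obtain w where w: "w \<in> carrier_vec (m*m)" "w \<noteq> 0\<^sub>v (m*m)" "T' *\<^sub>v w = l \<cdot>\<^sub>v w"
      unfolding eigenvalue_def eigenvector_def using T' by auto
    have "complex_of_real s \<cdot>\<^sub>v (T *\<^sub>v w) = l \<cdot>\<^sub>v w"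
      using w(3) smult_mat_vec[OF T w(1)] unfolding T'_def by simp
    then have "(1 / complex_of_real s) \<cdot>\<^sub>v (complex_of_real s \<cdot>\<^sub>v (T *\<^sub>v w)) = (1 / complex_of_real s) \<cdot>\<^sub>v (l \<cdot>\<^sub>v w)"
      by simp
    then have "T *\<^sub>v w = (l / complex_of_real s) \<cdot>\<^sub>v w"
      using s1 by (simp add: smult_smult_assoc)
    then have "eigenvalue T (l / complex_of_real s)"
      unfolding eigenvalue_def eigenvector_def using w T by auto
    then have "cmod (l / complex_of_real s) \<le> sr"
      using spectral_radius_mem_max(2)[OF T mm0] unfolding sr_def spectrum_def by auto
    then have "cmod l \<le> s * sr" using s1 by (simp add: norm_divide field_simps)
    with ssr show ?thesis by simp
  qed
  have "spectral_radius T' < 1"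
  proof -
    from spectral_radius_mem_max(1)[OF T' mm0] obtain l where "eigenvalue T' l" "spectral_radius T' = cmod l"
      unfolding spectrum_def by auto
    with evT' show ?thesis by simp
  qed
  from spectral_radius_jnf_norm_bound_less_1_upper_triangular[OF T' this]
  obtain c where c: "\<And>k. norm_bound (T' ^\<^sub>m k) c" by blast
  define r where "r = complex_of_real (sqrt s)"
  define M where "M \<alpha> = r \<cdot>\<^sub>m comp B W \<alpha>" for \<alpha>
  have ss: "sqrt s * sqrt s = s" using s1 by simp
  have rr: "cnj r * r = complex_of_real s"
    unfolding r_def complex_cnj_complex_of_real of_real_mult[symmetric] ss ..
  have Te: "T' $$ (i,j) = (\<Sum>\<alpha><q^2. cnj (M \<alpha> $$ (i div m, j div m)) * M \<alpha> $$ (i mod m, j mod m))"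
    if ij: "i < m*m" "j < m*m" for i j
  proof -
    have d: "i div m < m" "j div m < m" "i mod m < m" "j mod m < m" using idx_decomp ij by auto
    have "T' $$ (i,j) = complex_of_real s * T $$ (i,j)" using T ij by (simp add: T'_def)
    also have "... = (\<Sum>\<alpha><q^2. (cnj r * r) * (cnj (comp B W \<alpha> $$ (i div m, j div m)) * comp B W \<alpha> $$ (i mod m, j mod m)))"
      unfolding T_def transfer_entry[OF W ij] rr sum_distrib_left ..
    also have "... = (\<Sum>\<alpha><q^2. cnj (M \<alpha> $$ (i div m, j div m)) * M \<alpha> $$ (i mod m, j mod m))"
      using d by (intro sum.cong refl) (simp add: M_def mult_ac comp_def W[THEN carrier_matD(1)] W[THEN carrier_matD(2)])
    finally show ?thesis .
  qed
  have M0: "M 0 \<in> carrier_mat m m" using comp_carrier[OF W] by (simp add: M_def)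
  have ev': "M 0 *\<^sub>v v = (r * \<mu>) \<cdot>\<^sub>v v"
    unfolding M_def smult_mat_vec[OF comp_carrier[OF W] v(1)] v(3) by (simp add: smult_smult_assoc)
  have "cmod (r * \<mu>) \<le> 1"
    by (rule core_bound[OF T' Te c M0 v(1) v(2) ev']) (use q in simp_all)
  then have "sqrt s * cmod \<mu> \<le> 1" using s1 by (simp add: r_def norm_mult)
  moreover have "1 < sqrt s" using s1 by simp
  ultimately show ?thesis
  proof (rule_tac ccontr)
    assume a: "sqrt s * cmod \<mu> \<le> 1" "1 < sqrt s" "\<not> cmod \<mu> < 1"
    then have "sqrt s * 1 \<le> sqrt s * cmod \<mu>" by (intro mult_left_mono) auto
    with a show False by simp
  qed
qed



lemma solve_lin:
  fixes M :: "complex mat"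
  assumes M: "M \<in> carrier_mat k k" and d: "det M \<noteq> 0" and b: "b \<in> carrier_vec k"
  shows "\<exists>x \<in> carrier_vec k. M *\<^sub>v x = b"
proof -
  define x where "x = (1 / det M) \<cdot>\<^sub>v (adj_mat M *\<^sub>v b)"
  have adj: "adj_mat M \<in> carrier_mat k k" using M by (rule adj_mat)
  have x: "x \<in> carrier_vec k" using adj b by (simp add: x_def)
  have "M *\<^sub>v x = (1 / det M) \<cdot>\<^sub>v (M *\<^sub>v (adj_mat M *\<^sub>v b))"
    unfolding x_def using M adj b by (simp add: mult_mat_vec)
  also have "M *\<^sub>v (adj_mat M *\<^sub>v b) = (M * adj_mat M) *\<^sub>v b"
    using M adj b by (simp add: assoc_mult_mat_vec)
  also have "... = (det M \<cdot>\<^sub>m 1\<^sub>m k) *\<^sub>v b" using adj_mat(2)[OF M] by simp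
  also have "... = det M \<cdot>\<^sub>v b" using b by (simp add: smult_mat_vec[OF one_carrier_mat b])
  also have "(1 / det M) \<cdot>\<^sub>v (det M \<cdot>\<^sub>v b) = b" using d by (simp add: smult_smult_assoc)
  finally show ?thesis using x by blast
qed

lemma det_one_minus:
  fixes T :: "complex mat"
  assumes T: "T \<in> carrier_mat k k" and no1: "\<not> eigenvalue T 1"
  shows "det (1\<^sub>m k - T\<^sup>T) \<noteq> 0"
proof
  assume d: "det (1\<^sub>m k - T\<^sup>T) = 0"
  have "1\<^sub>m k - T\<^sup>T = (1\<^sub>m k - T)\<^sup>T" by (simp add: transpose_minus[OF one_carrier_mat T])
  then have "det (1\<^sub>m k - T) = 0" using d T by (metis det_transpose minus_carrier_mat one_carrier_mat)
  then obtain w where w: "w \<in> carrier_vec k" "w \<noteq> 0\<^sub>v k" "(1\<^sub>m k - T) *\<^sub>v w = 0\<^sub>v k"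
  proof -
    have "1\<^sub>m k - T \<in> carrier_mat k k" using T by (intro minus_carrier_mat one_carrier_mat)
    from det_0_iff_vec_prod_zero[OF this] \<open>det (1\<^sub>m k - T) = 0\<close> show ?thesis using that by blast
  qed
  have "(1\<^sub>m k - T) *\<^sub>v w = w - T *\<^sub>v w"
    by (simp only: minus_mult_distrib_mat_vec[OF one_carrier_mat T w(1)] one_mult_mat_vec[OF w(1)])
  with w have e: "w - T *\<^sub>v w = 0\<^sub>v k" by simp
  have "T *\<^sub>v w = w"
  proof (rule eq_vecI)
    fix i assume i: "i < dim_vec w"
    have "(w - T *\<^sub>v w) $ i = 0" using e w i by simp
    then show "(T *\<^sub>v w) $ i = w $ i" using T w i by simp
  qed (use T w in simp)
  then have "eigenvalue T 1" using w T unfolding eigenvalue_def eigenvector_def by auto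
  with no1 show False by simp
qed

lemma row_times_transpose:
  assumes T: "T \<in> carrier_mat k k" and v: "v \<in> carrier_vec k"
  shows "row_times v T = T\<^sup>T *\<^sub>v v"
  using T v by (intro eq_vecI) (auto simp: row_times_def scalar_prod_def mult.commute lessThan_atLeast0)



lemma hs_inner_zero: "X \<in> carrier_mat q q \<Longrightarrow> hs_inner X (0\<^sub>m q q) = 0"
  unfolding hs_inner_def mtrace_def
  by (simp add: mat_adjoint_def)

lemma dsum1:
  fixes f g :: "nat \<Rightarrow> complex"
  assumes "0 < N" "\<And>\<alpha>. \<alpha> < N \<Longrightarrow> g \<alpha> = (if \<alpha> = 0 then 1 else 0)"
  shows "(\<Sum>\<alpha><N. cnj (g \<alpha>) * f \<alpha>) = f 0"
proof -
  have "(\<Sum>\<alpha><N. cnj (g \<alpha>) * f \<alpha>) = (\<Sum>\<alpha><N. if \<alpha> = 0 then f \<alpha> else 0)"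
    using assms(2) by (intro sum.cong) auto
  also have "... = f 0" using assms(1) by (subst sum.delta) auto
  finally show ?thesis .
qed

lemma dsum2:
  fixes f g :: "nat \<Rightarrow> complex"
  assumes "0 < N" "\<And>\<alpha>. \<alpha> < N \<Longrightarrow> g \<alpha> = (if \<alpha> = 0 then 1 else 0)"
  shows "(\<Sum>\<alpha><N. f \<alpha> * g \<alpha>) = f 0"
proof -
  have "(\<Sum>\<alpha><N. f \<alpha> * g \<alpha>) = (\<Sum>\<alpha><N. if \<alpha> = 0 then f \<alpha> else 0)"
    using assms(2) by (intro sum.cong) auto
  also have "... = f 0" using assms(1) by (subst sum.delta) auto
  finally show ?thesis .
qed

lemma dsum3:
  fixes g :: "nat \<Rightarrow> complex"
  assumes "0 < N" "\<And>\<alpha>. \<alpha> < N \<Longrightarrow> g \<alpha> = (if \<alpha> = 0 then 1 else 0)"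
  shows "(\<Sum>\<alpha><N. cnj (g \<alpha>) * g \<alpha>) = 1"
  using dsum1[OF assms, of g] assms(2)[of 0] assms(1) by simp

lemma sum2_delta:
  fixes f :: "nat \<Rightarrow> nat \<Rightarrow> complex"
  assumes "0 < n"
  shows "(\<Sum>c<n. \<Sum>d<n. f c d * (if c = 0 \<and> d = 0 then 1 else 0)) = f 0 0"
proof -
  have "(\<Sum>c<n. \<Sum>d<n. f c d * (if c = 0 \<and> d = 0 then 1 else 0)) = (\<Sum>c<n. if c = 0 then f c 0 else 0)"
  proof (rule sum.cong[OF refl])
    fix c assume "c \<in> {..<n}"
    have "(\<Sum>d<n. f c d * (if c = 0 \<and> d = 0 then 1 else 0)) = (\<Sum>d<n. if d = 0 then (if c = 0 then f c d else 0) else 0)"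
      by (intro sum.cong) auto
    also have "... = (if c = 0 then f c 0 else 0)" using assms by (subst sum.delta) auto
    finally show "(\<Sum>d<n. f c d * (if c = 0 \<and> d = 0 then 1 else 0)) = (if c = 0 then f c 0 else 0)" .
  qed
  also have "... = f 0 0" using assms by (subst sum.delta) auto
  finally show ?thesis .
qed

lemma split2:
  fixes F :: "nat \<Rightarrow> nat \<Rightarrow> complex"
  shows "(\<Sum>c<Suc k. \<Sum>d<Suc k. F c d) = F 0 0 + (\<Sum>d<k. F 0 (Suc d)) + (\<Sum>c<k. F (Suc c) 0) + (\<Sum>c<k. \<Sum>d<k. F (Suc c) (Suc d))"
  by (simp only: sum.lessThan_Suc_shift sum.distrib) (simp add: add_ac)

theorem proposition1:
  fixes q chi :: nat and B :: "nat \<Rightarrow> complex mat" and W :: "complex mat mat"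
  assumes "0 < q"
    and "orthonormal_op_basis q B"
    and "first_degree q B chi W"
  shows "eigenvalue (transfer_mat q B (blockV chi W)) 1
    \<and> (\<forall>l. eigenvalue (transfer_mat q B (blockV chi W)) l \<and> l \<noteq> 1 \<longrightarrow> cmod l < 1)
    \<and> (\<exists>X \<in> carrier_mat (chi + 1) (chi + 1).
          row_times (vec_of X) (transfer_mat q B (blockV chi W)) = vec_of X
        \<and> X $$ (0, 0) = 1
        \<and> (\<forall>j\<in>{1..chi}. X $$ (j, 0) = cnj (X $$ (0, j))))"
proof -
  have RF: "regular_form q chi W" and FD: "\<And>l. eigenvalue (transfer_mat q B (blockA chi W)) l \<Longrightarrow> cmod l < 1"
    using assms(3) unfolding first_degree_def by auto
  have Wc: "W \<in> carrier_mat (chi+2) (chi+2)" and W00: "W $$ (0,0) = 1\<^sub>m q"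
    and Wi0: "\<And>i. 1 \<le> i \<Longrightarrow> i \<le> chi + 1 \<Longrightarrow> W $$ (i,0) = 0\<^sub>m q q"
    using RF unfolding regular_form_def by auto
  have Bc: "\<And>\<alpha>. \<alpha> < q^2 \<Longrightarrow> B \<alpha> \<in> carrier_mat q q"
    and Bo: "\<And>\<alpha> \<beta>. \<alpha> < q^2 \<Longrightarrow> \<beta> < q^2 \<Longrightarrow> hs_inner (B \<alpha>) (B \<beta>) = (if \<alpha> = \<beta> then 1 else 0)"
    and B0: "B 0 = 1\<^sub>m q"
    using assms(2) unfolding orthonormal_op_basis_def by auto
  have N: "0 < q^2" using assms(1) by simp
  define n where "n = Suc chi"
  define V where "V = blockV chi W"
  define A where "A = blockA chi W"
  have Vc: "V \<in> carrier_mat n n" by (simp add: V_def blockV_def n_def)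
  have Ac: "A \<in> carrier_mat chi chi" by (simp add: A_def blockA_def)
  define h where "h \<alpha> i j = hs_inner (B \<alpha>) (W $$ (i,j))" for \<alpha> i j
  have hV: "comp B V \<alpha> $$ (a,b) = h \<alpha> a b" if "a < n" "b < n" for \<alpha> a b
    using that by (simp add: comp_def V_def blockV_def h_def n_def)
  have hA: "comp B A \<alpha> $$ (a,b) = h \<alpha> (Suc a) (Suc b)" if "a < chi" "b < chi" for \<alpha> a b
    using that by (simp add: comp_def A_def blockA_def h_def)
  have h00: "h \<alpha> 0 0 = (if \<alpha> = 0 then 1 else 0)" if "\<alpha> < q^2" for \<alpha>
    using Bo[OF that N] by (simp add: h_def W00 B0[symmetric])
  have hi0: "h \<alpha> (Suc i) 0 = 0" if "i < chi" "\<alpha> < q^2" for \<alpha> i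
    using that Wi0[of "Suc i"] hs_inner_zero[OF Bc[OF that(2)]] by (simp add: h_def)
  have D1: "(\<Sum>\<alpha><q^2. cnj (h \<alpha> 0 0) * f \<alpha>) = f 0" for f
    by (rule dsum1[OF N h00])
  have D2: "(\<Sum>\<alpha><q^2. f \<alpha> * h \<alpha> 0 0) = f 0" for f
    by (rule dsum2[OF N h00])
  have D3: "(\<Sum>\<alpha><q^2. cnj (h \<alpha> 0 0) * h \<alpha> 0 0) = 1"
    by (rule dsum3[OF N h00])
  define TV where "TV = transfer_mat q B V"
  define TA where "TA = transfer_mat q B A"
  have TVc: "TV \<in> carrier_mat (n*n) (n*n)" unfolding TV_def using Vc by (rule transfer_carrier)
  have TAc: "TA \<in> carrier_mat (chi*chi) (chi*chi)" unfolding TA_def using Ac by (rule transfer_carrier)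
  have RV: "(TV *\<^sub>v y) $ (a*n+b) = (\<Sum>c<n. \<Sum>d<n. (\<Sum>\<alpha><q^2. cnj (h \<alpha> a c) * h \<alpha> b d) * y $ (c*n+d))"
    if "y \<in> carrier_vec (n*n)" "a < n" "b < n" for y a b
    unfolding TV_def right_act[OF Vc that] using that by (intro sum.cong refl) (simp add: hV)
  have LV: "row_times y TV $ (c*n+d) = (\<Sum>a<n. \<Sum>b<n. y $ (a*n+b) * (\<Sum>\<alpha><q^2. cnj (h \<alpha> a c) * h \<alpha> b d))"
    if "y \<in> carrier_vec (n*n)" "c < n" "d < n" for y c d
    unfolding TV_def left_act[OF Vc that] using that by (intro sum.cong refl) (simp add: hV)
  have RA: "(TA *\<^sub>v y) $ (a*chi+b) = (\<Sum>c<chi. \<Sum>d<chi. (\<Sum>\<alpha><q^2. cnj (h \<alpha> (Suc a) (Suc c)) * h \<alpha> (Suc b) (Suc d)) * y $ (c*chi+d))"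
    if "y \<in> carrier_vec (chi*chi)" "a < chi" "b < chi" for y a b
    unfolding TA_def right_act[OF Ac that] using that by (intro sum.cong refl) (simp add: hA)
  have LA: "row_times y TA $ (c*chi+d) = (\<Sum>a<chi. \<Sum>b<chi. y $ (a*chi+b) * (\<Sum>\<alpha><q^2. cnj (h \<alpha> (Suc a) (Suc c)) * h \<alpha> (Suc b) (Suc d)))"
    if "y \<in> carrier_vec (chi*chi)" "c < chi" "d < chi" for y c d
    unfolding TA_def left_act[OF Ac that] using that by (intro sum.cong refl) (simp add: hA)
  have A0ev: "cmod \<mu> < 1" if "eigenvalue (comp B A 0) \<mu>" for \<mu>
    by (rule A0_eig[OF Ac assms(1) FD[folded A_def] that])
  have A0c: "comp B A 0 \<in> carrier_mat chi chi" using Ac by (rule comp_carrier)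
  have A0e: "(comp B A 0 *\<^sub>v x) $ i = (\<Sum>j<chi. h 0 (Suc i) (Suc j) * x $ j)"
    if "x \<in> carrier_vec chi" "i < chi" for x i
    using that A0c by (auto simp: scalar_prod_def lessThan_atLeast0 hA intro!: sum.cong)
  have P1: "eigenvalue TV 1"
  proof -
    define e :: "complex vec" where "e = unit_vec (n*n) 0"
    have ec: "e \<in> carrier_vec (n*n)" by (simp add: e_def)
    have eidx: "e $ (c*n+d) = (if c = 0 \<and> d = 0 then 1 else 0)" if "c < n" "d < n" for c d
      using that idx_lt[OF that] by (simp add: e_def n_def)
    have "TV *\<^sub>v e = e"
    proof (rule vec_eq_idx[of _ n])
      show "TV *\<^sub>v e \<in> carrier_vec (n*n)" using TVc ec by (rule mult_mat_vec_carrier)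
      show "e \<in> carrier_vec (n*n)" by (rule ec)
      fix a b assume ab: "a < n" "b < n"
      have "(TV *\<^sub>v e) $ (a*n+b) = (\<Sum>c<n. \<Sum>d<n. (\<Sum>\<alpha><q^2. cnj (h \<alpha> a c) * h \<alpha> b d) * (if c = 0 \<and> d = 0 then 1 else 0))"
        unfolding RV[OF ec ab] by (intro sum.cong refl) (simp add: eidx)
      also have "... = (\<Sum>\<alpha><q^2. cnj (h \<alpha> a 0) * h \<alpha> b 0)"
        by (rule sum2_delta) (simp add: n_def)
      also have "... = e $ (a*n+b)"
      proof (cases a)
        case 0
        then show ?thesis
        proof (cases b)
          case 0
          then show ?thesis using \<open>a = 0\<close> D3 eidx[of 0 0] ab by simp
        next
          case (Suc b')
          then have "b' < chi" using ab by (simp add: n_def)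
          then show ?thesis using \<open>a = 0\<close> Suc hi0 eidx[OF ab] ab by simp
        qed
      next
        case (Suc a')
        then have "a' < chi" using ab by (simp add: n_def)
        then show ?thesis using Suc hi0 eidx[OF ab] ab by simp
      qed
      finally show "(TV *\<^sub>v e) $ (a*n+b) = e $ (a*n+b)" .
    qed
    moreover have "e \<noteq> 0\<^sub>v (n*n)"
    proof
      assume "e = 0\<^sub>v (n*n)"
      then have "e $ (0*n+0) = 0" by (simp add: n_def)
      with eidx[of 0 0] show False by (simp add: n_def)
    qed
    ultimately show ?thesis unfolding eigenvalue_def eigenvector_def using ec TVc by auto
  qed
  have Z1: "(\<Sum>\<alpha><q^2. cnj (h \<alpha> (Suc i) 0) * f \<alpha>) = 0" if "i < chi" for i f
    using hi0[OF that] by (intro sum.neutral) simp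
  have Z2: "(\<Sum>\<alpha><q^2. f \<alpha> * h \<alpha> (Suc i) 0) = 0" if "i < chi" for i f
    using hi0[OF that] by (intro sum.neutral) simp
  have P2: "cmod l < 1" if ev: "eigenvalue TV l" and l1: "l \<noteq> 1" for l
  proof -
    obtain y where y: "y \<in> carrier_vec (n*n)" "y \<noteq> 0\<^sub>v (n*n)" "TV *\<^sub>v y = l \<cdot>\<^sub>v y"
      using ev TVc unfolding eigenvalue_def eigenvector_def by auto
    define Y where "Y c d = y $ (c*n+d)" for c d
    have RE: "(\<Sum>c<n. \<Sum>d<n. (\<Sum>\<alpha><q^2. cnj (h \<alpha> a c) * h \<alpha> b d) * Y c d) = l * Y a b"
      if ab: "a < n" "b < n" for a b
    proof -
      have "(TV *\<^sub>v y) $ (a*n+b) = l * Y a b" using y(3) y(1) idx_lt[OF ab] by (simp add: Y_def)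
      then show ?thesis unfolding RV[OF y(1) ab] Y_def .
    qed
    have RE': "(\<Sum>c<Suc chi. \<Sum>d<Suc chi. (\<Sum>\<alpha><q^2. cnj (h \<alpha> a c) * h \<alpha> b d) * Y c d) = l * Y a b"
      if ab: "a < Suc chi" "b < Suc chi" for a b
      using RE[of a b] ab by (simp add: n_def)
    show ?thesis
    proof (cases "\<exists>i<chi. \<exists>j<chi. Y (Suc i) (Suc j) \<noteq> 0")
      case True
      define yb where "yb = vec (chi*chi) (\<lambda>k. Y (Suc (k div chi)) (Suc (k mod chi)))"
      have ybc: "yb \<in> carrier_vec (chi*chi)" by (simp add: yb_def)
      have ybi: "yb $ (i*chi+j) = Y (Suc i) (Suc j)" if "i < chi" "j < chi" for i j
        using that idx_lt[OF that] by (simp add: yb_def)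
      have "TA *\<^sub>v yb = l \<cdot>\<^sub>v yb"
      proof (rule vec_eq_idx[of _ chi])
        show "TA *\<^sub>v yb \<in> carrier_vec (chi*chi)" using TAc ybc by (rule mult_mat_vec_carrier)
        show "l \<cdot>\<^sub>v yb \<in> carrier_vec (chi*chi)" using ybc by simp
        fix i j assume ij: "i < chi" "j < chi"
        have "(TA *\<^sub>v yb) $ (i*chi+j) = (\<Sum>c<chi. \<Sum>d<chi. (\<Sum>\<alpha><q^2. cnj (h \<alpha> (Suc i) (Suc c)) * h \<alpha> (Suc j) (Suc d)) * Y (Suc c) (Suc d))"
          unfolding RA[OF ybc ij] by (intro sum.cong refl) (simp add: ybi)
        also have "... = l * Y (Suc i) (Suc j)"
          using RE'[of "Suc i" "Suc j", unfolded split2] ij by (simp add: Z1 Z2)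
        also have "... = (l \<cdot>\<^sub>v yb) $ (i*chi+j)" using ybc ij idx_lt[OF ij] by (simp add: ybi)
        finally show "(TA *\<^sub>v yb) $ (i*chi+j) = (l \<cdot>\<^sub>v yb) $ (i*chi+j)" .
      qed
      moreover have "yb \<noteq> 0\<^sub>v (chi*chi)"
      proof
        assume "yb = 0\<^sub>v (chi*chi)"
        with True ybi idx_lt show False by fastforce
      qed
      ultimately have "eigenvalue TA l" unfolding eigenvalue_def eigenvector_def using ybc TAc by auto
      then show ?thesis using FD unfolding TA_def A_def by blast
    next
      case False
      then have Yb0: "Y (Suc i) (Suc j) = 0" if "i < chi" "j < chi" for i j using that by blast
      show ?thesis
      proof (cases "\<exists>j<chi. Y 0 (Suc j) \<noteq> 0")
        case True
        define x where "x = vec chi (\<lambda>d. Y 0 (Suc d))"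
        have xc: "x \<in> carrier_vec chi" by (simp add: x_def)
        have "comp B A 0 *\<^sub>v x = l \<cdot>\<^sub>v x"
        proof (rule eq_vecI)
          fix j assume "j < dim_vec (l \<cdot>\<^sub>v x)"
          then have j: "j < chi" by (simp add: x_def)
          have "(comp B A 0 *\<^sub>v x) $ j = (\<Sum>d<chi. h 0 (Suc j) (Suc d) * Y 0 (Suc d))"
            unfolding A0e[OF xc j] by (intro sum.cong refl) (simp add: x_def)
          also have "... = l * Y 0 (Suc j)"
            using RE'[of 0 "Suc j", unfolded split2] j hi0[OF j, of 0] N by (simp add: Z1 Z2 D1 Yb0)
          finally show "(comp B A 0 *\<^sub>v x) $ j = (l \<cdot>\<^sub>v x) $ j" using j by (simp add: x_def)
        qed (use A0c in \<open>simp add: x_def\<close>)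
        moreover have "x \<noteq> 0\<^sub>v chi"
        proof
          assume "x = 0\<^sub>v chi"
          with True show False by (metis index_vec index_zero_vec(1) x_def)
        qed
        ultimately have "eigenvalue (comp B A 0) l" unfolding eigenvalue_def eigenvector_def using xc A0c by auto
        then show ?thesis by (rule A0ev)
      next
        case False
        then have Y0j: "Y 0 (Suc j) = 0" if "j < chi" for j using that by blast
        show ?thesis
        proof (cases "\<exists>i<chi. Y (Suc i) 0 \<noteq> 0")
          case True
          define z where "z = vec chi (\<lambda>c. cnj (Y (Suc c) 0))"
          have zc: "z \<in> carrier_vec chi" by (simp add: z_def)
          have "comp B A 0 *\<^sub>v z = cnj l \<cdot>\<^sub>v z"
          proof (rule eq_vecI)
            fix i assume "i < dim_vec (cnj l \<cdot>\<^sub>v z)"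
            then have i: "i < chi" by (simp add: z_def)
            have e1: "(\<Sum>c<chi. cnj (h 0 (Suc i) (Suc c)) * Y (Suc c) 0) = l * Y (Suc i) 0"
              using RE'[of "Suc i" 0, unfolded split2] i hi0[OF i, of 0] N by (simp add: Z1 Z2 D2 Yb0)
            have "(comp B A 0 *\<^sub>v z) $ i = (\<Sum>c<chi. h 0 (Suc i) (Suc c) * cnj (Y (Suc c) 0))"
              unfolding A0e[OF zc i] by (intro sum.cong refl) (simp add: z_def)
            also have "... = cnj (\<Sum>c<chi. cnj (h 0 (Suc i) (Suc c)) * Y (Suc c) 0)" by simp
            also have "... = cnj l * cnj (Y (Suc i) 0)" unfolding e1 by simp
            finally show "(comp B A 0 *\<^sub>v z) $ i = (cnj l \<cdot>\<^sub>v z) $ i" using i by (simp add: z_def)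
          qed (use A0c in \<open>simp add: z_def\<close>)
          moreover have "z \<noteq> 0\<^sub>v chi"
          proof
            assume "z = 0\<^sub>v chi"
            with True show False by (metis complex_cnj_zero_iff index_vec index_zero_vec(1) z_def)
          qed
          ultimately have "eigenvalue (comp B A 0) (cnj l)" unfolding eigenvalue_def eigenvector_def using zc A0c by auto
          then show ?thesis using A0ev by fastforce
        next
          case False
          then have Yi0: "Y (Suc i) 0 = 0" if "i < chi" for i using that by blast
          have "Y 0 0 = l * Y 0 0"
            using RE'[of 0 0, unfolded split2] by (simp add: D3 Yb0 Y0j Yi0)
          then have Y00: "Y 0 0 = 0" using l1 by (metis mult_cancel_right1 mult.commute)
          have "y = 0\<^sub>v (n*n)"
          proof (rule vec_eq_idx[of _ n])
            show "y \<in> carrier_vec (n*n)" by (rule y(1))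
            show "0\<^sub>v (n*n) \<in> carrier_vec (n*n)" by simp
            fix a b assume ab: "a < n" "b < n"
            have "Y a b = 0"
            proof (cases a)
              case 0
              then show ?thesis using Y00 Y0j ab by (cases b) (auto simp: n_def)
            next
              case (Suc a')
              then show ?thesis using Yi0 Yb0 ab by (cases b) (auto simp: n_def)
            qed
            then show "y $ (a*n+b) = 0\<^sub>v (n*n) $ (a*n+b)" using idx_lt[OF ab] by (simp add: Y_def)
          qed
          with y(2) show ?thesis by simp
        qed
      qed
    qed
  qed
  have no1A0: "\<not> eigenvalue (comp B A 0) 1" using A0ev by fastforce
  have no1TA: "\<not> eigenvalue TA 1" using FD unfolding TA_def A_def by fastforce
  define A0 where "A0 = comp B A 0"
  have A0c': "A0 \<in> carrier_mat chi chi" using A0c by (simp add: A0_def)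
  define c0 where "c0 = vec chi (\<lambda>j. h 0 0 (Suc j))"
  have "det (1\<^sub>m chi - A0\<^sup>T) \<noteq> 0" using det_one_minus[OF A0c'] no1A0 by (simp add: A0_def)
  moreover have "1\<^sub>m chi - A0\<^sup>T \<in> carrier_mat chi chi"
    using A0c' by (intro minus_carrier_mat one_carrier_mat) simp
  moreover have "c0 \<in> carrier_vec chi" by (simp add: c0_def)
  ultimately obtain x where xc: "x \<in> carrier_vec chi"
    and xs: "(1\<^sub>m chi - A0\<^sup>T) *\<^sub>v x = c0" using solve_lin by blast
  have xeq: "x $ j = h 0 0 (Suc j) + (\<Sum>b<chi. x $ b * h 0 (Suc b) (Suc j))" if j: "j < chi" for j
  proof -
    have "(1\<^sub>m chi - A0\<^sup>T) *\<^sub>v x = x - row_times x A0"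
    proof -
      have tc: "A0\<^sup>T \<in> carrier_mat chi chi" using A0c' by simp
      show ?thesis by (simp add: minus_mult_distrib_mat_vec[OF one_carrier_mat tc xc] row_times_transpose[OF A0c' xc] xc)
    qed
    then have "x $ j - row_times x A0 $ j = h 0 0 (Suc j)"
      using xs j xc A0c' by (metis c0_def index_minus_vec(1) index_vec row_times_carrier carrier_vecD)
    moreover have "row_times x A0 $ j = (\<Sum>b<chi. x $ b * h 0 (Suc b) (Suc j))"
      using xc A0c' j by (auto simp: row_times_def A0_def hA intro!: sum.cong)
    ultimately show ?thesis by (simp add: algebra_simps)
  qed
  define R where "R i j = (\<Sum>\<alpha><q^2. cnj (h \<alpha> 0 (Suc i)) * h \<alpha> 0 (Suc j))
      + (\<Sum>b<chi. x $ b * (\<Sum>\<alpha><q^2. cnj (h \<alpha> 0 (Suc i)) * h \<alpha> (Suc b) (Suc j)))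
      + (\<Sum>a<chi. cnj (x $ a) * (\<Sum>\<alpha><q^2. cnj (h \<alpha> (Suc a) (Suc i)) * h \<alpha> 0 (Suc j)))" for i j
  define r where "r = vec (chi*chi) (\<lambda>k. R (k div chi) (k mod chi))"
  have "det (1\<^sub>m (chi*chi) - TA\<^sup>T) \<noteq> 0" using det_one_minus[OF TAc no1TA] .
  moreover have "1\<^sub>m (chi*chi) - TA\<^sup>T \<in> carrier_mat (chi*chi) (chi*chi)"
    using TAc by (intro minus_carrier_mat one_carrier_mat) simp
  moreover have "r \<in> carrier_vec (chi*chi)" by (simp add: r_def)
  ultimately obtain xb where xbc: "xb \<in> carrier_vec (chi*chi)"
    and xbs: "(1\<^sub>m (chi*chi) - TA\<^sup>T) *\<^sub>v xb = r" using solve_lin by blast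
  have xbeq: "xb $ (i*chi+j) = R i j + row_times xb TA $ (i*chi+j)" if ij: "i < chi" "j < chi" for i j
  proof -
    have k: "i*chi+j < chi*chi" using ij by (rule idx_lt)
    have "(1\<^sub>m (chi*chi) - TA\<^sup>T) *\<^sub>v xb = xb - row_times xb TA"
    proof -
      have tc: "TA\<^sup>T \<in> carrier_mat (chi*chi) (chi*chi)" using TAc by simp
      show ?thesis by (simp add: minus_mult_distrib_mat_vec[OF one_carrier_mat tc xbc] row_times_transpose[OF TAc xbc] xbc)
    qed
    then have "xb $ (i*chi+j) - row_times xb TA $ (i*chi+j) = r $ (i*chi+j)"
      using xbs k xbc TAc by (metis index_minus_vec(1) row_times_carrier carrier_vecD)
    moreover have "r $ (i*chi+j) = R i j" using k ij by (simp add: r_def)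
    ultimately show ?thesis by (simp add: algebra_simps)
  qed
  define Xf where "Xf a b = (if a = 0 then (if b = 0 then 1 else x $ (b - 1))
      else (if b = 0 then cnj (x $ (a - 1)) else xb $ ((a - 1) * chi + (b - 1))))" for a b
  define X where "X = mat n n (\<lambda>(a,b). Xf a b)"
  have Xc: "X \<in> carrier_mat (chi+1) (chi+1)" by (simp add: X_def n_def)
  have Xc': "X \<in> carrier_mat n n" by (simp add: X_def)
  have XX: "X $$ (a,b) = Xf a b" if "a < n" "b < n" for a b using that by (simp add: X_def)
  have Xv: "row_times (vec_of X) TV = vec_of X"
  proof (rule vec_eq_idx[of _ n])
    show "row_times (vec_of X) TV \<in> carrier_vec (n*n)" using TVc by (rule row_times_carrier)
    show "vec_of X \<in> carrier_vec (n*n)" using Xc' by (rule vec_of_carrier)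
    fix c d assume cd: "c < n" "d < n"
    have "row_times (vec_of X) TV $ (c*n+d) = (\<Sum>a<n. \<Sum>b<n. Xf a b * (\<Sum>\<alpha><q^2. cnj (h \<alpha> a c) * h \<alpha> b d))"
      unfolding LV[OF vec_of_carrier[OF Xc'] cd] by (intro sum.cong refl) (simp add: vec_of_idx[OF Xc'] XX)
    also have "... = (\<Sum>a<Suc chi. \<Sum>b<Suc chi. Xf a b * (\<Sum>\<alpha><q^2. cnj (h \<alpha> a c) * h \<alpha> b d))"
      by (simp add: n_def)
    also have "... = Xf c d"
    proof (cases c)
      case 0
      then show ?thesis
      proof (cases d)
        case 0
        then show ?thesis using \<open>c = 0\<close> unfolding split2 by (simp add: Xf_def D3 Z1 Z2)
      next
        case (Suc j)
        then have j: "j < chi" using cd by (simp add: n_def)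
        then show ?thesis using \<open>c = 0\<close> Suc xeq[OF j] unfolding split2 by (simp add: Xf_def D1 Z1 Z2)
      qed
    next
      case (Suc i)
      then have i: "i < chi" using cd by (simp add: n_def)
      then show ?thesis
      proof (cases d)
        case 0
        have "cnj (x $ i) = cnj (h 0 0 (Suc i)) + (\<Sum>a<chi. cnj (x $ a) * cnj (h 0 (Suc a) (Suc i)))"
          using xeq[OF i] by simp
        then show ?thesis using Suc 0 i unfolding split2 by (simp add: Xf_def D2 Z1 Z2)
      next
        case (Suc j)
        then have j: "j < chi" using cd by (simp add: n_def)
        have "(\<Sum>a<chi. \<Sum>b<chi. xb $ (a*chi+b) * (\<Sum>\<alpha><q^2. cnj (h \<alpha> (Suc a) (Suc i)) * h \<alpha> (Suc b) (Suc j)))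
            = row_times xb TA $ (i*chi+j)" using LA[OF xbc i j] by simp
        then show ?thesis using \<open>c = Suc i\<close> Suc i j xbeq[OF i j] unfolding split2 by (simp add: Xf_def R_def)
      qed
    qed
    also have "... = vec_of X $ (c*n+d)" using vec_of_idx[OF Xc' cd] XX[OF cd] by simp
    finally show "row_times (vec_of X) TV $ (c*n+d) = vec_of X $ (c*n+d)" .
  qed
  have P3: "\<exists>X \<in> carrier_mat (chi + 1) (chi + 1).
          row_times (vec_of X) (transfer_mat q B (blockV chi W)) = vec_of X
        \<and> X $$ (0, 0) = 1
        \<and> (\<forall>j\<in>{1..chi}. X $$ (j, 0) = cnj (X $$ (0, j)))"
  proof (intro bexI[OF _ Xc] conjI ballI)
    show "row_times (vec_of X) (transfer_mat q B (blockV chi W)) = vec_of X"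
      using Xv by (simp add: TV_def V_def)
    show "X $$ (0,0) = 1" using XX[of 0 0] by (simp add: n_def Xf_def)
    fix j assume "j \<in> {1..chi}"
    then have "j < n" "0 < j" by (auto simp: n_def)
    then show "X $$ (j, 0) = cnj (X $$ (0, j))" using XX[of j 0] XX[of 0 j] by (simp add: n_def Xf_def)
  qed
  show ?thesis using P1 P2 P3 unfolding TV_def V_def by blast
qed


end
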